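(* Let $k\ge2$, $n\ge1$ be integers, let $\bar{\mathcal{P}}\in\mathbb{R}^{[k,n]}$ be a columnwise-substochastic tensor, $\mathbf{v}\in\mathbb{R}^n$ a stochastic vector and $\alpha\in[0,1)$. Let $\Delta:=\{\mathbf{y}\in\mathbb{R}^n_+:\mathbf{e}^T\mathbf{y}\le(1-\alpha)^{-\frac{1}{k-1}}\}$ and $\Phi(\mathbf{y}):=(1+\alpha\mathbf{e}^T(\bar{\mathcal{P}}\mathbf{y}^{k-1}))^{-\frac{k-2}{k-1}}(\mathbf{v}+\alpha\bar{\mathcal{P}}\mathbf{y}^{k-1})$. Define $\varsigma:=(2k-3)\alpha(1-\alpha)^{-\frac{k-2}{k-1}}$. If $\varsigma<1$, then $\Phi$ maps $\Delta$ into $\Delta$ and is a contraction on $\Delta$, i.e., $\|\Phi(\mathbf{x})-\Phi(\mathbf{y})\|_1\le\varsigma\|\mathbf{x}-\mathbf{y}\|_1$ for all $\mathbf{x},\mathbf{y}\in\Delta$.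
   Context: For $\mathcal{P}\in\mathbb{R}^{[k,n]}$ (real tensors of order $k$, dimension $n$) and $\mathbf{y}\in\mathbb{R}^n$, $(\mathcal{P}\mathbf{y}^{k-1})_i=\sum_{i_2,\dots,i_k}p_{i i_2\dots i_k}y_{i_2}\cdots y_{i_k}$. $\bar{\mathcal{P}}$ is columnwise-substochastic if its entries are nonnegative and $\sum_{i}\bar p_{i i_2\dots i_k}\le1$ for all $i_2,\dots,i_k$. $\mathbf{e}$ is the all-ones vector; a stochastic vector is nonnegative with entries summing to $1$. *)

theory Defs
  imports "HOL-Analysis.Analysis"
begin

text \<open>Tensors of order k and dimension n (n = CARD('n)) are represented as functions
  P :: 'n \<Rightarrow> 'n list \<Rightarrow> real, where P i is = p_{i i_2 ... i_k} for index lists is = [i_2,...,i_k]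
  of length k - 1. Entries at lists of other lengths are irrelevant.\<close>

definition tensor_indices :: "nat \<Rightarrow> 'n::finite list set" where
  "tensor_indices k = {is. length is = k - 1}"

definition tensor_apply :: "nat \<Rightarrow> ('n::finite \<Rightarrow> 'n list \<Rightarrow> real) \<Rightarrow> real^'n \<Rightarrow> real^'n" where
  "tensor_apply k P y = (\<chi> i. \<Sum>is\<in>tensor_indices k. P i is * prod_list (map (\<lambda>j. y $ j) is))"

definition colwise_substochastic :: "nat \<Rightarrow> ('n::finite \<Rightarrow> 'n list \<Rightarrow> real) \<Rightarrow> bool" where
  "colwise_substochastic k P \<longleftrightarrow>
     (\<forall>i. \<forall>is\<in>tensor_indices k. 0 \<le> P i is) \<and>
     (\<forall>is\<in>tensor_indices k. (\<Sum>i\<in>UNIV. P i is) \<le> 1)"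

definition stochastic_vec :: "real^'n::finite \<Rightarrow> bool" where
  "stochastic_vec v \<longleftrightarrow> (\<forall>i. 0 \<le> v $ i) \<and> (\<Sum>i\<in>UNIV. v $ i) = 1"

definition esum :: "real^'n::finite \<Rightarrow> real" where
  "esum y = (\<Sum>i\<in>UNIV. y $ i)"

definition norm1 :: "real^'n::finite \<Rightarrow> real" where
  "norm1 y = (\<Sum>i\<in>UNIV. \<bar>y $ i\<bar>)"

end

theory Submission
  imports Defs
begin
lemma fin_len: "finite {xs::'a::finite list. length xs = n}"
  using finite_lists_length_eq[of "UNIV::'a set" n] by simp

lemma sum_len_Suc:
  fixes g :: "'a::finite list \<Rightarrow> real"
  shows "sum g {xs. length xs = Suc n} = (\<Sum>a\<in>UNIV. \<Sum>xs\<in>{xs. length xs = n}. g (a#xs))"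
proof -
  have e: "{xs::'a list. length xs = Suc n} = (\<lambda>(a,xs). a#xs) ` (UNIV \<times> {xs. length xs = n})"
    by (auto simp: length_Suc_conv image_iff)
  have i: "inj_on (\<lambda>(a,xs). a#xs) (UNIV \<times> {xs::'a list. length xs = n})"
    by (auto simp: inj_on_def)
  have "sum g {xs. length xs = Suc n} = (\<Sum>(a,xs)\<in>UNIV \<times> {xs. length xs = n}. g (a#xs))"
    unfolding e by (subst sum.reindex[OF i]) (simp add: case_prod_unfold)
  also have "\<dots> = (\<Sum>a\<in>UNIV. \<Sum>xs\<in>{xs. length xs = n}. g (a#xs))"
    by (rule sum.cartesian_product[symmetric])
  finally show ?thesis .
qed

lemma sum_prod_len:
  fixes f :: "'a::finite \<Rightarrow> real"
  shows "(\<Sum>xs\<in>{xs. length xs = n}. prod_list (map f xs)) = (\<Sum>a\<in>UNIV. f a) ^ n"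
proof (induction n)
  case 0
  have "{xs::'a list. length xs = 0} = {[]}" by auto
  then show ?case by simp
next
  case (Suc n)
  show ?case
    by (simp add: sum_len_Suc sum_distrib_left[symmetric] Suc sum_distrib_right[symmetric])
qed

lemma prod_nonneg_list:
  fixes f :: "'a \<Rightarrow> real"
  shows "(\<And>a. 0 \<le> f a) \<Longrightarrow> 0 \<le> prod_list (map f xs)"
  by (induction xs) auto

lemma sum_prod_diff_len:
  fixes x y :: "'a::finite \<Rightarrow> real"
  assumes "\<And>a. 0 \<le> x a" "\<And>a. 0 \<le> y a" "(\<Sum>a\<in>UNIV. x a) \<le> R" "(\<Sum>a\<in>UNIV. y a) \<le> R"
  shows "(\<Sum>xs\<in>{xs. length xs = n}. \<bar>prod_list (map x xs) - prod_list (map y xs)\<bar>)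
          \<le> real n * R ^ (n - 1) * (\<Sum>a\<in>UNIV. \<bar>x a - y a\<bar>)"
proof (induction n)
  case 0
  have "{xs::'a list. length xs = 0} = {[]}" by auto
  then show ?case by simp
next
  case (Suc n)
  let ?D = "\<Sum>a\<in>UNIV. \<bar>x a - y a\<bar>"
  let ?X = "\<lambda>xs. prod_list (map x xs)" and ?Y = "\<lambda>xs. prod_list (map y xs)"
  have R0: "0 \<le> R" using assms(2,4) by (meson order.trans sum_nonneg)
  have pt: "\<bar>x a * ?X xs - y a * ?Y xs\<bar> \<le> \<bar>x a - y a\<bar> * ?X xs + y a * \<bar>?X xs - ?Y xs\<bar>" for a xs
  proof -
    have "x a * ?X xs - y a * ?Y xs = (x a - y a) * ?X xs + y a * (?X xs - ?Y xs)"
      by (simp add: algebra_simps)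
    hence "\<bar>x a * ?X xs - y a * ?Y xs\<bar> = \<bar>(x a - y a) * ?X xs + y a * (?X xs - ?Y xs)\<bar>" by simp
    also have "\<dots> \<le> \<bar>(x a - y a) * ?X xs\<bar> + \<bar>y a * (?X xs - ?Y xs)\<bar>" by (rule abs_triangle_ineq)
    also have "\<dots> = \<bar>x a - y a\<bar> * ?X xs + y a * \<bar>?X xs - ?Y xs\<bar>"
      using assms(1,2) prod_nonneg_list[of x xs] by (simp add: abs_mult)
    finally show ?thesis .
  qed
  have "(\<Sum>xs\<in>{xs. length xs = Suc n}. \<bar>?X xs - ?Y xs\<bar>)
      = (\<Sum>a\<in>UNIV. \<Sum>xs\<in>{xs. length xs = n}. \<bar>x a * ?X xs - y a * ?Y xs\<bar>)"
    by (simp add: sum_len_Suc)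
  also have "\<dots> \<le> (\<Sum>a\<in>UNIV. \<Sum>xs\<in>{xs. length xs = n}. \<bar>x a - y a\<bar> * ?X xs + y a * \<bar>?X xs - ?Y xs\<bar>)"
    by (intro sum_mono pt)
  also have "\<dots> = (\<Sum>a\<in>UNIV. \<bar>x a - y a\<bar> * (\<Sum>a\<in>UNIV. x a) ^ n
       + y a * (\<Sum>xs\<in>{xs. length xs = n}. \<bar>?X xs - ?Y xs\<bar>))"
    by (simp add: sum.distrib sum_distrib_left[symmetric] sum_prod_len)
  also have "\<dots> \<le> (\<Sum>a\<in>UNIV. \<bar>x a - y a\<bar> * R ^ n + y a * (real n * R ^ (n - 1) * ?D))"
    apply (intro sum_mono add_mono mult_left_mono Suc power_mono assms)
    using assms(1) by (auto intro: sum_nonneg assms)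
  also have "\<dots> = ?D * R ^ n + (\<Sum>a\<in>UNIV. y a) * (real n * R ^ (n - 1) * ?D)"
    by (simp add: sum.distrib sum_distrib_right)
  also have "\<dots> \<le> ?D * R ^ n + R * (real n * R ^ (n - 1) * ?D)"
    by (intro add_left_mono mult_right_mono assms) (auto intro!: mult_nonneg_nonneg R0 sum_nonneg zero_le_power)
  also have "\<dots> = real (Suc n) * R ^ (Suc n - 1) * ?D"
    by (cases n) (auto simp: algebra_simps)
  finally show ?case .
qed

lemma key_ineq:
  fixes u w p :: real
  assumes "1 \<le> u" "u \<le> w" "0 \<le> p" "p \<le> 1"
  shows "(u powr (-p) - w powr (-p)) * u \<le> p * (w - u)"
proof -
  define x where "x = w / u"
  have u0: "u > 0" using assms by simp
  have x1: "x \<ge> 1" using assms by (simp add: x_def)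
  have w: "w = u * x" using u0 by (simp add: x_def)
  have "x powr p * 1 powr (1 - p) \<le> p * x + (1 - p) * 1"
    by (rule Youngs_inequality_0) (use assms x1 in auto)
  hence xp: "x powr p \<le> 1 + p * (x - 1)" by (simp add: algebra_simps)
  have xp0: "x powr p > 0" using x1 by simp
  have "x powr (-p) = 1 / x powr p" by (simp add: powr_minus divide_inverse)
  also have "\<dots> \<ge> 1 / (1 + p * (x - 1))"
    using xp xp0 by (intro divide_left_mono mult_pos_pos) linarith+
  finally have "x powr (-p) \<ge> 1 / (1 + p * (x - 1))" .
  moreover have "1 / (1 + p * (x - 1)) \<ge> 1 - p * (x - 1)"
  proof -
    have z: "0 \<le> p * (x - 1)" using assms x1 by simp
    have "(1 - p * (x - 1)) * (1 + p * (x - 1)) = 1 - (p * (x - 1))^2" by (simp add: algebra_simps power2_eq_square)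
    hence "(1 - p * (x - 1)) * (1 + p * (x - 1)) \<le> 1" by simp
    thus ?thesis using z by (simp add: field_simps)
  qed
  ultimately have xm: "1 - x powr (-p) \<le> p * (x - 1)" by linarith
  have "w powr (-p) = u powr (-p) * x powr (-p)" using w u0 x1 by (simp add: powr_mult)
  hence "(u powr (-p) - w powr (-p)) * u = u powr (-p) * (1 - x powr (-p)) * u" by (simp add: algebra_simps)
  also have "\<dots> \<le> u powr (-p) * (p * (x - 1)) * u"
    using xm u0 by (intro mult_right_mono mult_left_mono) auto
  also have "\<dots> = u powr (-p) * (p * (w - u))" using w u0 by (simp add: algebra_simps)
  also have "\<dots> \<le> 1 * (p * (w - u))"
    using assms powr_mono[of "-p" 0 u] by (intro mult_right_mono) auto
  finally show ?thesis by simp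
qed


lemma esum_add: "esum (a + b) = esum a + esum b" by (simp add: esum_def sum.distrib)
lemma esum_diff: "esum (a - b) = esum a - esum b" by (simp add: esum_def sum_subtractf)
lemma esum_scale: "esum (c *\<^sub>R a) = c * esum a" by (simp add: esum_def sum_distrib_left)
lemma norm1_add: "norm1 (a + b) \<le> norm1 a + norm1 b"
  unfolding norm1_def sum.distrib[symmetric] by (intro sum_mono) (simp add: abs_triangle_ineq)
lemma norm1_scale: "norm1 (c *\<^sub>R a) = \<bar>c\<bar> * norm1 a" by (simp add: norm1_def sum_distrib_left abs_mult)
lemma norm1_nonneg: "(\<And>i. 0 \<le> a $ i) \<Longrightarrow> norm1 a = esum a" by (simp add: norm1_def esum_def)
lemma norm1_sym: "norm1 (a - b) = norm1 (b - a)" by (simp add: norm1_def abs_minus_commute)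
lemma esum_diff_le: "\<bar>esum a - esum b\<bar> \<le> norm1 (a - b)"
  unfolding norm1_def esum_def sum_subtractf[symmetric] by (simp add: sum_abs)

lemma T_nonneg:
  assumes "colwise_substochastic k P" "\<And>i. 0 \<le> y $ i"
  shows "0 \<le> tensor_apply k P y $ i"
  using assms unfolding tensor_apply_def colwise_substochastic_def
  by (auto intro!: sum_nonneg mult_nonneg_nonneg prod_nonneg_list)

lemma T_esum:
  fixes P :: "'n::finite \<Rightarrow> 'n list \<Rightarrow> real"
  assumes "colwise_substochastic k P" "\<And>i. 0 \<le> y $ i"
  shows "esum (tensor_apply k P y) \<le> esum y ^ (k - 1)"
proof -
  let ?Y = "\<lambda>is. prod_list (map (\<lambda>j. y $ j) is)"
  have "esum (tensor_apply k P y) = (\<Sum>is\<in>tensor_indices k. (\<Sum>i\<in>UNIV. P i is) * ?Y is)"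
    unfolding esum_def tensor_apply_def by (simp add: sum.swap[of _ UNIV] sum_distrib_right)
  also have "\<dots> \<le> (\<Sum>is\<in>tensor_indices k. 1 * ?Y is)"
    using assms unfolding colwise_substochastic_def
    by (intro sum_mono mult_right_mono) (auto intro: prod_nonneg_list)
  also have "\<dots> = esum y ^ (k - 1)"
    unfolding tensor_indices_def esum_def by (simp add: sum_prod_len)
  finally show ?thesis .
qed

lemma T_lip:
  fixes P :: "'n::finite \<Rightarrow> 'n list \<Rightarrow> real"
  assumes "colwise_substochastic k P" "\<And>i. 0 \<le> y $ i" "\<And>i. 0 \<le> x $ i"
    "esum x \<le> R" "esum y \<le> R"
  shows "norm1 (tensor_apply k P x - tensor_apply k P y) \<le> real (k - 1) * R ^ (k - 2) * norm1 (x - y)"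
proof -
  let ?Y = "\<lambda>is. prod_list (map (\<lambda>j. y $ j) is)"
  let ?X = "\<lambda>is. prod_list (map (\<lambda>j. x $ j) is)"
  have "norm1 (tensor_apply k P x - tensor_apply k P y)
      = (\<Sum>i\<in>UNIV. \<bar>\<Sum>is\<in>tensor_indices k. P i is * (?X is - ?Y is)\<bar>)"
    unfolding norm1_def tensor_apply_def by (simp add: sum_subtractf[symmetric] algebra_simps)
  also have "\<dots> \<le> (\<Sum>i\<in>UNIV. \<Sum>is\<in>tensor_indices k. P i is * \<bar>?X is - ?Y is\<bar>)"
    using assms(1) unfolding colwise_substochastic_def
    by (intro sum_mono order.trans[OF sum_abs]) (simp add: abs_mult)
  also have "\<dots> = (\<Sum>is\<in>tensor_indices k. (\<Sum>i\<in>UNIV. P i is) * \<bar>?X is - ?Y is\<bar>)"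
    by (simp add: sum.swap[of _ UNIV] sum_distrib_right)
  also have "\<dots> \<le> (\<Sum>is\<in>tensor_indices k. 1 * \<bar>?X is - ?Y is\<bar>)"
    using assms unfolding colwise_substochastic_def
    by (intro sum_mono mult_right_mono) auto
  also have "\<dots> \<le> real (k - 1) * R ^ (k - 1 - 1) * (\<Sum>a\<in>UNIV. \<bar>x $ a - y $ a\<bar>)"
    unfolding tensor_indices_def
    using sum_prod_diff_len[of "\<lambda>j. x $ j" "\<lambda>j. y $ j" R "k - 1"] assms(2-5) unfolding esum_def by simp
  also have "\<dots> = real (k - 1) * R ^ (k - 2) * norm1 (x - y)"
    by (simp add: norm1_def numeral_2_eq_2)
  finally show ?thesis .
qed

theorem theorem3p10:
  fixes k :: nat and P :: "'n::finite \<Rightarrow> 'n list \<Rightarrow> real" and v :: "real^'n" and \<alpha> :: real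
  assumes "k \<ge> 2"
    and "colwise_substochastic k P"
    and "stochastic_vec v"
    and "0 \<le> \<alpha>" and "\<alpha> < 1"
  defines "\<Delta> \<equiv> {y :: real^'n. (\<forall>i. 0 \<le> y $ i) \<and> esum y \<le> (1 - \<alpha>) powr (- 1 / (real k - 1))}"
    and "\<Phi> \<equiv> (\<lambda>y :: real^'n. (1 + \<alpha> * esum (tensor_apply k P y)) powr (- (real k - 2) / (real k - 1))
                  *\<^sub>R (v + \<alpha> *\<^sub>R tensor_apply k P y))"
    and "\<sigma> \<equiv> (2 * real k - 3) * \<alpha> * (1 - \<alpha>) powr (- (real k - 2) / (real k - 1))"
  assumes "\<sigma> < 1"
  shows "\<Phi> ` \<Delta> \<subseteq> \<Delta> \<and> (\<forall>x\<in>\<Delta>. \<forall>y\<in>\<Delta>. norm1 (\<Phi> x - \<Phi> y) \<le> \<sigma> * norm1 (x - y))"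
proof -
  note k2 = assms(1) and cs = assms(2) and a0 = assms(4) and a1 = assms(5)
  define T where "T = tensor_apply k P"
  define s where "s = (\<lambda>y. esum (T y))"
  define p where "p = (real k - 2) / (real k - 1)"
  define c where "c = (\<lambda>y. (1 + \<alpha> * s y) powr (- p))"
  define R where "R = (1 - \<alpha>) powr (- 1 / (real k - 1))"
  have km: "real k - 1 > 0" using k2 by simp
  have Phi: "\<Phi> y = c y *\<^sub>R (v + \<alpha> *\<^sub>R T y)" for y
    unfolding \<Phi>_def c_def s_def T_def p_def by (simp add: minus_divide_left)
  have Delta: "\<Delta> = {y. (\<forall>i. 0 \<le> y $ i) \<and> esum y \<le> R}" unfolding \<Delta>_def R_def by simp
  have p0: "0 \<le> p" and p1: "p \<le> 1" using k2 km unfolding p_def by auto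
  have R0: "R > 0" using a1 unfolding R_def by simp
  have Rm: "R ^ (k - 1) = 1 / (1 - \<alpha>)"
  proof -
    have "R ^ (k - 1) = R powr real (k - 1)" using R0 by (simp add: powr_realpow)
    also have "\<dots> = (1 - \<alpha>) powr (- 1 / (real k - 1) * real (k - 1))"
      unfolding R_def by (simp add: powr_powr)
    also have "- 1 / (real k - 1) * real (k - 1) = -1" using k2 km by (simp add: of_nat_diff)
    finally show ?thesis using a1 by (simp add: powr_minus_divide)
  qed
  have Rm1: "R ^ (k - 2) = (1 - \<alpha>) powr (- p)"
  proof -
    have "R ^ (k - 2) = R powr real (k - 2)" using R0 by (simp add: powr_realpow)
    also have "\<dots> = (1 - \<alpha>) powr (- 1 / (real k - 1) * real (k - 2))"
      unfolding R_def by (simp add: powr_powr)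
    also have "- 1 / (real k - 1) * real (k - 2) = - p" using k2 km unfolding p_def by (simp add: of_nat_diff)
    finally show ?thesis .
  qed
  have sig: "\<sigma> = \<alpha> * (1 + p) * (real (k - 1) * R ^ (k - 2))"
  proof -
    have h: "(1 + p) * real (k - 1) = 2 * real k - 3"
      using k2 km unfolding p_def by (simp add: of_nat_diff field_simps)
    have e: "- (real k - 2) / (real k - 1) = - p" unfolding p_def by (simp add: minus_divide_left)
    have "\<sigma> = (2 * real k - 3) * \<alpha> * (1 - \<alpha>) powr (- p)" by (simp only: \<sigma>_def e)
    also have "\<dots> = \<alpha> * ((1 + p) * real (k - 1)) * (1 - \<alpha>) powr (- p)"
      unfolding h by (simp add: mult_ac)
    also have "\<dots> = \<alpha> * (1 + p) * (real (k - 1) * (1 - \<alpha>) powr (- p))"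
      by (simp only: mult_ac)
    finally show ?thesis unfolding Rm1 .
  qed
  have v0: "\<And>i. 0 \<le> v $ i" and v1: "esum v = 1"
    using assms(3) unfolding stochastic_vec_def esum_def by auto
  have Tn: "0 \<le> T y $ i" if "y \<in> \<Delta>" for y i
    using that T_nonneg[OF cs] unfolding Delta T_def by auto
  have s0: "0 \<le> s y" if "y \<in> \<Delta>" for y
    using Tn[OF that] unfolding s_def esum_def by (simp add: sum_nonneg)
  have sb: "s y \<le> 1 / (1 - \<alpha>)" if "y \<in> \<Delta>" for y
  proof -
    have y0: "\<And>i. 0 \<le> y $ i" and yR: "esum y \<le> R" using that unfolding Delta by auto
    have "s y \<le> esum y ^ (k - 1)" unfolding s_def T_def using T_esum[OF cs y0] .
    also have "\<dots> \<le> R ^ (k - 1)" using y0 yR by (intro power_mono) (auto simp: esum_def sum_nonneg)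
    finally show ?thesis using Rm by simp
  qed
  have esPhi: "esum (\<Phi> y) = c y * (1 + \<alpha> * s y)" for y
    unfolding Phi esum_scale esum_add v1 s_def by simp
  have c1: "c y \<le> 1" if "y \<in> \<Delta>" for y
  proof -
    have "1 \<le> 1 + \<alpha> * s y" using mult_nonneg_nonneg[OF a0 s0[OF that]] by simp
    hence "(1 + \<alpha> * s y) powr (-p) \<le> (1 + \<alpha> * s y) powr 0"
      using p0 by (intro powr_mono) auto
    thus ?thesis unfolding c_def using \<open>1 \<le> 1 + \<alpha> * s y\<close> by simp
  qed
  have c0: "0 \<le> c y" for y unfolding c_def by simp
  have part1: "\<Phi> ` \<Delta> \<subseteq> \<Delta>"
  proof
    fix z assume "z \<in> \<Phi> ` \<Delta>"
    then obtain y where y: "y \<in> \<Delta>" and z: "z = \<Phi> y" by auto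
    have nn: "0 \<le> z $ i" for i
      unfolding z Phi using c0[of y] v0[of i] Tn[OF y, of i] a0 by simp
    have pos: "1 + \<alpha> * s y > 0" using s0[OF y] a0 by (simp add: add_pos_nonneg)
    have "esum z = (1 + \<alpha> * s y) powr (1 - p)"
      unfolding z esPhi c_def using pos by (simp add: powr_diff powr_minus_divide)
    also have "1 - p = 1 / (real k - 1)" unfolding p_def using km by (simp add: field_simps)
    also have "(1 + \<alpha> * s y) powr (1 / (real k - 1)) \<le> (1 / (1 - \<alpha>)) powr (1 / (real k - 1))"
    proof (rule powr_mono2)
      have "\<alpha> * s y \<le> \<alpha> * (1 / (1 - \<alpha>))" using sb[OF y] a0 by (rule mult_left_mono)
      thus "1 + \<alpha> * s y \<le> 1 / (1 - \<alpha>)" using a1 by (simp add: field_simps)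
    qed (use km pos in auto)
    also have "\<dots> = R" unfolding R_def using a1 by (simp add: powr_divide powr_minus_divide)
    finally show "z \<in> \<Delta>" unfolding Delta using nn by auto
  qed
  have ord: "norm1 (\<Phi> x - \<Phi> y) \<le> \<sigma> * norm1 (x - y)"
    if x: "x \<in> \<Delta>" and y: "y \<in> \<Delta>" and sxy: "s y \<le> s x" for x y
  proof -
    define N where "N = norm1 (T x - T y)"
    have NL: "N \<le> real (k - 1) * R ^ (k - 2) * norm1 (x - y)"
      unfolding N_def T_def using x y unfolding Delta by (intro T_lip[OF cs]) auto
    have sN: "s x - s y \<le> N" unfolding N_def s_def using esum_diff_le[of "T x" "T y"] by simp
    have eq: "\<Phi> x - \<Phi> y = (c x * \<alpha>) *\<^sub>R (T x - T y) + (c x - c y) *\<^sub>R (v + \<alpha> *\<^sub>R T y)"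
      unfolding Phi by (simp add: vec_eq_iff algebra_simps)
    have cyx: "c x \<le> c y" unfolding c_def
      using powr_mono2'[of "-p" "1 + \<alpha> * s y" "1 + \<alpha> * s x"] p0 s0[OF y] a0 sxy
      by (simp add: add_pos_nonneg mult_left_mono)
    have n2: "norm1 (v + \<alpha> *\<^sub>R T y) = 1 + \<alpha> * s y"
      using v0 Tn[OF y] a0 by (subst norm1_nonneg) (auto simp: esum_add esum_scale v1 s_def)
    have key: "(c y - c x) * (1 + \<alpha> * s y) \<le> p * (\<alpha> * (s x - s y))"
      unfolding c_def using key_ineq[of "1 + \<alpha> * s y" "1 + \<alpha> * s x" p] p0 p1 s0[OF y] a0 sxy
      by (simp add: mult_left_mono algebra_simps)
    have "norm1 (\<Phi> x - \<Phi> y) \<le> c x * \<alpha> * N + (c y - c x) * (1 + \<alpha> * s y)"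
    proof -
      have "norm1 (\<Phi> x - \<Phi> y) \<le> norm1 ((c x * \<alpha>) *\<^sub>R (T x - T y)) + norm1 ((c x - c y) *\<^sub>R (v + \<alpha> *\<^sub>R T y))"
        unfolding eq by (rule norm1_add)
      also have "\<dots> = \<bar>c x * \<alpha>\<bar> * N + \<bar>c x - c y\<bar> * (1 + \<alpha> * s y)"
        unfolding norm1_scale n2 N_def ..
      also have "\<bar>c x * \<alpha>\<bar> = c x * \<alpha>" using c0[of x] a0 by simp
      also have "\<bar>c x - c y\<bar> = c y - c x" using cyx by simp
      finally show ?thesis .
    qed
    also have "\<dots> \<le> 1 * \<alpha> * N + p * (\<alpha> * N)"
      apply (intro add_mono key[THEN order.trans] mult_right_mono mult_left_mono)
      using c1[OF x] a0 p0 sN by (auto simp: N_def norm1_def)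
    also have "\<dots> = \<alpha> * (1 + p) * N" by (simp add: algebra_simps)
    also have "\<dots> \<le> \<alpha> * (1 + p) * (real (k - 1) * R ^ (k - 2) * norm1 (x - y))"
      using NL a0 p0 by (intro mult_left_mono) auto
    finally show ?thesis unfolding sig by (simp add: algebra_simps)
  qed
  have part2: "\<forall>x\<in>\<Delta>. \<forall>y\<in>\<Delta>. norm1 (\<Phi> x - \<Phi> y) \<le> \<sigma> * norm1 (x - y)"
  proof (intro ballI)
    fix x y assume x: "x \<in> \<Delta>" and y: "y \<in> \<Delta>"
    show "norm1 (\<Phi> x - \<Phi> y) \<le> \<sigma> * norm1 (x - y)"
    proof (cases "s y \<le> s x")
      case True then show ?thesis using ord x y by blast
    next
      case False then show ?thesis using ord[OF y x] norm1_sym[of "\<Phi> x"] norm1_sym[of x] by simp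
    qed
  qed
  show ?thesis using part1 part2 by blast
qed

end
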